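(* Any streaming algorithm (possibly randomized, succeeding with constant probability) for the $k$-connectivity augmentation problem with unweighted links in the fully streaming model, even when $k$ is known, that approximates the optimal solution to any finite factor requires $\Omega(nk)$ bits of space.
   Context: $k$-connectivity augmentation problem: given a $(k-1)$-edge-connected $n$-vertex graph $G=(V,E)$ (possibly with parallel edges) and a set of links $L\subseteq\binom{V}{2}$, find a minimum-cardinality $S\subseteq L$ such that $(V,E\cup S)$ is $k$-edge-connected. Fully streaming model: the edges of $E$ and the links of $L$ arrive in a single stream in an arbitrary interleaved order, and all storage counts toward space. *)

theory Defs
  imports "HOL-Probability.Probability"
begin

text \<open>Vertices are 0..<n. An edge or link is an unordered pair, a 2-element nat set.
  The graph G is a multiset of edges (parallel edges allowed).\<close>

definition verts :: "nat \<Rightarrow> nat set" where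
  "verts n = {0..<n}"

definition is_pair :: "nat \<Rightarrow> nat set \<Rightarrow> bool" where
  "is_pair n e \<longleftrightarrow> e \<subseteq> verts n \<and> card e = 2"

definition cut_size :: "nat set multiset \<Rightarrow> nat set \<Rightarrow> nat" where
  "cut_size E X = size (filter_mset (\<lambda>e. e \<inter> X \<noteq> {} \<and> e - X \<noteq> {}) E)"

definition k_edge_connected :: "nat \<Rightarrow> nat \<Rightarrow> nat set multiset \<Rightarrow> bool" where
  "k_edge_connected n k E \<longleftrightarrow>
     (\<forall>X. X \<noteq> {} \<and> X \<subset> verts n \<longrightarrow> k \<le> cut_size E X)"

text \<open>Stream items: Inl e is a graph edge, Inr l is a link.\<close>
type_synonym item = "nat set + nat set"

definition stream_edges :: "item list \<Rightarrow> nat set multiset" where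
  "stream_edges xs = mset [e. Inl e \<leftarrow> xs]"

definition stream_links :: "item list \<Rightarrow> nat set set" where
  "stream_links xs = set [l. Inr l \<leftarrow> xs]"

definition valid_stream :: "nat \<Rightarrow> nat \<Rightarrow> item list \<Rightarrow> bool" where
  "valid_stream n k xs \<longleftrightarrow>
     (\<forall>x\<in>set xs. is_pair n (case x of Inl e \<Rightarrow> e | Inr l \<Rightarrow> l)) \<and>
     k_edge_connected n (k - 1) (stream_edges xs) \<and>
     k_edge_connected n k (stream_edges xs + mset_set (stream_links xs))"

definition augments :: "nat \<Rightarrow> nat \<Rightarrow> item list \<Rightarrow> nat set set \<Rightarrow> bool" where
  "augments n k xs S \<longleftrightarrow> S \<subseteq> stream_links xs \<and>
     k_edge_connected n k (stream_edges xs + mset_set S)"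

definition approx_solution :: "real \<Rightarrow> nat \<Rightarrow> nat \<Rightarrow> item list \<Rightarrow> nat set set \<Rightarrow> bool" where
  "approx_solution \<alpha> n k xs S \<longleftrightarrow> augments n k xs S \<and>
     (\<forall>S'. augments n k xs S' \<longrightarrow> real (card S) \<le> \<alpha> * real (card S'))"

text \<open>A randomized streaming algorithm: a random seed r drawn from a distribution
  (public randomness, not charged to space), an initial memory state, an update rule
  applied to each arriving item, and an output rule.\<close>
record stream_alg =
  init :: "nat \<Rightarrow> bool list"
  step :: "nat \<Rightarrow> bool list \<Rightarrow> item \<Rightarrow> bool list"
  out :: "nat \<Rightarrow> bool list \<Rightarrow> nat set set"

definition run :: "stream_alg \<Rightarrow> nat \<Rightarrow> item list \<Rightarrow> bool list" where
  "run A r xs = fold (\<lambda>x st. step A r st x) xs (init A r)"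

definition uses_space :: "stream_alg \<Rightarrow> nat \<Rightarrow> nat \<Rightarrow> nat \<Rightarrow> bool" where
  "uses_space A n k s \<longleftrightarrow>
     (\<forall>r xs i. valid_stream n k xs \<longrightarrow> length (run A r (take i xs)) \<le> s)"

definition solves :: "stream_alg \<Rightarrow> nat pmf \<Rightarrow> real \<Rightarrow> nat \<Rightarrow> nat \<Rightarrow> bool" where
  "solves A P \<alpha> n k \<longleftrightarrow>
     (\<forall>xs. valid_stream n k xs \<longrightarrow>
        measure_pmf.prob P {r. approx_solution \<alpha> n k xs (out A r (run A r xs))} \<ge> 2/3)"

end

theory Submission
  imports Defs
begin

lemma sum_pow_dist:
  fixes I :: "'i set" and y :: "'i \<Rightarrow> bool" and t :: real
  assumes "finite I"
  shows "(\<Sum>x\<in>PiE I (\<lambda>_. UNIV). t ^ card {i\<in>I. y i \<noteq> x i}) = (1 + t) ^ card I"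
proof -
  have "(\<Sum>x\<in>PiE I (\<lambda>_. UNIV). t ^ card {i\<in>I. y i \<noteq> x i})
      = (\<Sum>x\<in>PiE I (\<lambda>_. UNIV). \<Prod>i\<in>I. (if y i \<noteq> x i then t else 1))"
  proof (rule sum.cong[OF refl])
    fix x
    have "(\<Prod>i\<in>I. (if y i \<noteq> x i then t else 1)) = (\<Prod>i\<in>{i\<in>I. y i \<noteq> x i}. t)"
      using assms by (simp add: prod.If_cases Int_def)
    then show "t ^ card {i\<in>I. y i \<noteq> x i} = (\<Prod>i\<in>I. (if y i \<noteq> x i then t else 1))" by simp
  qed
  also have "\<dots> = (\<Prod>i\<in>I. \<Sum>b\<in>(UNIV::bool set). (if y i \<noteq> b then t else 1))"
    by (rule prod_sum_PiE[symmetric]) (use assms in auto)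
  also have "\<dots> = (\<Prod>i\<in>I. 1 + t)"
    by (rule prod.cong[OF refl]) (simp add: UNIV_bool)
  finally show ?thesis by simp
qed

lemma agree_bound:
  fixes I :: "'i set" and x y :: "'i \<Rightarrow> bool"
  assumes "finite I"
  shows "real (card {i\<in>I. y i = x i}) \<le> 7 * card I / 12 +
     card I * (5/7) ^ card {i\<in>I. y i \<noteq> x i} / ((5/7) powr (5 * card I / 12))"
proof -
  let ?m = "card I" and ?a = "card {i\<in>I. y i = x i}" and ?d = "card {i\<in>I. y i \<noteq> x i}"
  let ?th = "(5/7::real) powr (5 * card I / 12)"
  have sum: "?a + ?d = ?m"
  proof -
    have "{i\<in>I. y i = x i} \<union> {i\<in>I. y i \<noteq> x i} = I" by auto
    moreover have "{i\<in>I. y i = x i} \<inter> {i\<in>I. y i \<noteq> x i} = {}" by auto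
    ultimately show ?thesis using assms by (metis (no_types, lifting) card_Un_disjoint finite_Un)
  qed
  have pos: "(0::real) < (5/7) powr (5 * card I / 12)" by simp
  have nn: "0 \<le> real ?m * (5/7) ^ ?d / ((5/7) powr (5 * card I / 12))" by simp
  show ?thesis
  proof (cases "12 * ?d \<ge> 5 * ?m")
    case True
    then have "real ?a \<le> 7 * ?m / 12" using sum by linarith
    then show ?thesis using nn by linarith
  next
    case False
    then have lt: "real ?d \<le> 5 * ?m / 12" by linarith
    have "(5/7::real) powr (5 * card I / 12) \<le> (5/7) powr (real ?d)"
      by (rule powr_mono') (use lt in auto)
    also have "\<dots> = (5/7) ^ ?d" by (simp add: powr_realpow)
    finally have h: "?th \<le> (5/7) ^ ?d" .
    have "real ?m * ?th \<le> real ?m * (5/7)^?d" by (rule mult_left_mono[OF h]) simp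
    then have "real ?m \<le> real ?m * (5/7)^?d / ?th" using pos by (simp add: le_divide_eq)
    moreover have "real ?a \<le> real ?m" using sum by linarith
    ultimately show ?thesis by simp
  qed
qed

lemma count_bound:
  fixes I :: "'i set" and g :: "('i \<Rightarrow> bool) \<Rightarrow> 'st" and Dc :: "'st \<Rightarrow> 'i \<Rightarrow> bool"
  assumes fin: "finite I"
  defines "X \<equiv> PiE I (\<lambda>_. UNIV::bool set)"
  shows "real (\<Sum>x\<in>X. card {i\<in>I. Dc (g x) i = x i}) \<le>
     7 * card I * 2 ^ card I / 12 +
     card I * card (g ` X) * (12/7) ^ card I / ((5/7) powr (5 * card I / 12))"
proof -
  let ?m = "card I" and ?th = "(5/7::real) powr (5 * card I / 12)"
  define W where "W x y = (5/7::real) ^ card {i\<in>I. y i \<noteq> x i}" for x y :: "'i \<Rightarrow> bool"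
  have finX: "finite X" unfolding X_def using fin by (simp add: finite_PiE)
  have cardX: "card X = 2 ^ ?m" unfolding X_def using fin by (simp add: card_PiE)
  have finY: "finite (g ` X)" using finX by simp
  have step: "real (card {i\<in>I. Dc (g x) i = x i}) \<le> 7 * ?m / 12 + ?m * (\<Sum>st\<in>g ` X. W x (Dc st)) / ?th"
    if "x \<in> X" for x
  proof -
    have "real (card {i\<in>I. Dc (g x) i = x i}) \<le> 7 * ?m / 12 + ?m * W x (Dc (g x)) / ?th"
      using agree_bound[OF fin, of "Dc (g x)" x] unfolding W_def by simp
    also have "W x (Dc (g x)) \<le> (\<Sum>st\<in>g ` X. W x (Dc st))"
      by (rule member_le_sum) (use that finY in \<open>auto simp: W_def\<close>)
    then have "?m * W x (Dc (g x)) / ?th \<le> ?m * (\<Sum>st\<in>g ` X. W x (Dc st)) / ?th"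
      by (simp add: divide_right_mono mult_left_mono)
    finally show ?thesis by simp
  qed
  have "real (\<Sum>x\<in>X. card {i\<in>I. Dc (g x) i = x i}) = (\<Sum>x\<in>X. real (card {i\<in>I. Dc (g x) i = x i}))"
    by simp
  also have "\<dots> \<le> (\<Sum>x\<in>X. 7 * ?m / 12 + ?m * (\<Sum>st\<in>g ` X. W x (Dc st)) / ?th)"
    by (rule sum_mono) (rule step)
  also have "\<dots> = 2 ^ ?m * (7 * ?m / 12) + ?m / ?th * (\<Sum>st\<in>g ` X. \<Sum>x\<in>X. W x (Dc st))"
    by (simp add: sum.distrib cardX sum_divide_distrib[symmetric] sum_distrib_left[symmetric] sum.swap[of _ _ X] mult.commute)
  also have "(\<Sum>st\<in>g ` X. \<Sum>x\<in>X. W x (Dc st)) = (\<Sum>st\<in>g ` X. (12/7) ^ ?m)"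
  proof (rule sum.cong[OF refl])
    fix st
    show "(\<Sum>x\<in>X. W x (Dc st)) = (12/7) ^ ?m"
      using sum_pow_dist[OF fin, where y="Dc st" and t="5/7"] by (simp add: W_def X_def)
  qed
  also have "\<dots> = card (g ` X) * (12/7) ^ ?m" by simp
  finally show ?thesis by (simp add: algebra_simps)
qed

lemma exists_good_seed:
  fixes P :: "nat pmf" and ok :: "nat \<Rightarrow> 'x \<Rightarrow> 'i \<Rightarrow> bool" and X :: "'x set" and I :: "'i set"
  assumes finX: "finite X" and finI: "finite I"
    and pr: "\<forall>x\<in>X. \<forall>i\<in>I. measure_pmf.prob P {r. ok r x i} \<ge> 2/3"
  shows "\<exists>r. 2 * card X * card I \<le> 3 * (\<Sum>x\<in>X. card {i\<in>I. ok r x i})"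
proof (rule ccontr)
  assume neg: "\<not> ?thesis"
  have lt: "real (\<Sum>x\<in>X. card {i\<in>I. ok r x i}) \<le> (2 * real (card X) * real (card I) - 1) / 3" for r
  proof -
    have "3 * (\<Sum>x\<in>X. card {i\<in>I. ok r x i}) + 1 \<le> 2 * card X * card I"
    proof -
      from neg have "\<not> 2 * card X * card I \<le> 3 * (\<Sum>x\<in>X. card {i\<in>I. ok r x i})" by blast
      then show ?thesis by simp
    qed
    then have "real (3 * (\<Sum>x\<in>X. card {i\<in>I. ok r x i}) + 1) \<le> real (2 * card X * card I)"
      by (rule of_nat_mono)
    then show ?thesis by simp
  qed
  have ind: "integrable (measure_pmf P) (indicator A :: nat \<Rightarrow> real)" for A
    by (rule measure_pmf.integrable_const_bound[where B=1]) (auto simp: indicator_def)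
  have eq: "real (\<Sum>x\<in>X. card {i\<in>I. ok r x i}) = (\<Sum>x\<in>X. \<Sum>i\<in>I. indicator {r. ok r x i} r :: real)" for r
  proof -
    have "real (card {i\<in>I. ok r x i}) = (\<Sum>i\<in>I. indicator {r. ok r x i} r :: real)" for x
      using finI by (simp add: indicator_def sum.If_cases Int_def)
    then show ?thesis by simp
  qed
  have "measure_pmf.expectation P (\<lambda>r. real (\<Sum>x\<in>X. card {i\<in>I. ok r x i}))
      = (\<Sum>x\<in>X. \<Sum>i\<in>I. measure_pmf.prob P {r. ok r x i})"
  proof -
    have "measure_pmf.expectation P (\<lambda>r. \<Sum>x\<in>X. \<Sum>i\<in>I. indicator {r. ok r x i} r :: real)
       = (\<Sum>x\<in>X. measure_pmf.expectation P (\<lambda>r. \<Sum>i\<in>I. indicator {r. ok r x i} r :: real))"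
      by (simp add: ind integrable_sum)
    also have "\<dots> = (\<Sum>x\<in>X. \<Sum>i\<in>I. measure_pmf.expectation P (indicator {r. ok r x i} :: nat \<Rightarrow> real))"
      by (simp add: ind)
    also have "\<dots> = (\<Sum>x\<in>X. \<Sum>i\<in>I. measure_pmf.prob P {r. ok r x i})"
      by simp
    finally show ?thesis unfolding eq .
  qed
  also have "\<dots> \<ge> (\<Sum>x\<in>X. \<Sum>i\<in>I. 2/3)"
    using pr by (intro sum_mono) auto
  finally have ge: "measure_pmf.expectation P (\<lambda>r. real (\<Sum>x\<in>X. card {i\<in>I. ok r x i})) \<ge> 2 * card X * card I / 3"
    by simp
  have "measure_pmf.expectation P (\<lambda>r. real (\<Sum>x\<in>X. card {i\<in>I. ok r x i})) \<le>
        measure_pmf.expectation P (\<lambda>r. (2 * real (card X) * real (card I) - 1) / 3)"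
  proof (rule integral_mono)
    show "integrable (measure_pmf P) (\<lambda>r. real (\<Sum>x\<in>X. card {i\<in>I. ok r x i}))"
      unfolding eq by (intro Bochner_Integration.integrable_sum ind)
  qed (use lt in auto)
  also have "\<dots> = (2 * real (card X) * real (card I) - 1) / 3" by simp
  finally show False using ge by (simp add: of_nat_mult)
qed

lemma pow_aux: "((a::real)^12 * b^5 / c^12)^m = a^(12*m) * b^(5*m) / c^(12*m)"
  by (simp add: power_divide power_mult_distrib power_mult[symmetric] mult.commute)

lemma comm_lb:
  fixes I :: "'i set" and \<sigma> :: "nat \<Rightarrow> ('i \<Rightarrow> bool) \<Rightarrow> 'st" and Dc :: "nat \<Rightarrow> 'st \<Rightarrow> 'i \<Rightarrow> bool"
    and P :: "nat pmf" and K :: nat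
  assumes fin: "finite I" and ne: "I \<noteq> {}"
    and cardK: "\<forall>r. card (\<sigma> r ` PiE I (\<lambda>_. UNIV)) \<le> K"
    and pr: "\<forall>x\<in>PiE I (\<lambda>_. UNIV). \<forall>i\<in>I. measure_pmf.prob P {r. Dc r (\<sigma> r x) i = x i} \<ge> 2/3"
  shows "2 ^ (card I div 5) \<le> 2^48 * K^12"
proof -
  define X where "X = PiE I (\<lambda>_. UNIV::bool set)"
  define m where "m = card I"
  have mpos: "0 < m" using fin ne unfolding m_def by (simp add: card_gt_0_iff)
  have finX: "finite X" unfolding X_def using fin by (simp add: finite_PiE)
  have cardX: "card X = 2 ^ m" unfolding X_def m_def using fin by (simp add: card_PiE)
  obtain r where r: "2 * card X * card I \<le> 3 * (\<Sum>x\<in>X. card {i\<in>I. Dc r (\<sigma> r x) i = x i})"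
    using exists_good_seed[OF finX fin, of P "\<lambda>r x i. Dc r (\<sigma> r x) i = x i"] pr unfolding X_def by blast
  define th where "th = (5/7::real) powr (5 * m / 12)"
  have thpos: "0 < th" unfolding th_def by simp
  have cb: "real (\<Sum>x\<in>X. card {i\<in>I. Dc r (\<sigma> r x) i = x i}) \<le>
     7 * m * 2 ^ m / 12 + m * card (\<sigma> r ` X) * (12/7) ^ m / th"
    using count_bound[OF fin, of "Dc r" "\<sigma> r"] unfolding X_def th_def m_def by simp
  have cK: "real (card (\<sigma> r ` X)) \<le> K" using cardK unfolding X_def by simp
  have "2 * 2^m * m / 3 \<le> real (\<Sum>x\<in>X. card {i\<in>I. Dc r (\<sigma> r x) i = x i})"
  proof -
    have "real (2 * card X * card I) \<le> real (3 * (\<Sum>x\<in>X. card {i\<in>I. Dc r (\<sigma> r x) i = x i}))"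
      using r by (rule of_nat_mono)
    then show ?thesis unfolding cardX m_def[symmetric] by simp
  qed
  also have "\<dots> \<le> 7 * m * 2 ^ m / 12 + m * K * (12/7) ^ m / th"
  proof -
    have "real m * card (\<sigma> r ` X) * (12/7) ^ m / th \<le> m * K * (12/7) ^ m / th"
      using cK thpos by (intro divide_right_mono mult_right_mono) (auto intro!: mult_left_mono)
    then show ?thesis using cb unfolding of_nat_mult by linarith
  qed
  finally have "real m * (2^m / 12) \<le> real m * (K * (12/7) ^ m / th)"
    by (simp add: field_simps)
  moreover have "0 < real m" using mpos by simp
  ultimately have "2^m / 12 \<le> K * (12/7) ^ m / th" by (rule mult_left_le_imp_le)
  then have key: "2^m * th \<le> 12 * K * (12/7::real) ^ m" using thpos by (simp add: field_simps)
  have th12: "th ^ 12 = (5/7) ^ (5 * m)"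
  proof -
    have "th ^ 12 = (5/7::real) powr (5 * m / 12 * 12)" unfolding th_def
      by (subst powr_realpow[symmetric]) (simp_all add: powr_powr)
    also have "\<dots> = (5/7) powr (real (5 * m))" by simp
    also have "\<dots> = (5/7) ^ (5 * m)" by (rule powr_realpow) simp
    finally show ?thesis .
  qed
  define \<rho> where "\<rho> = (2^12 * (5/7)^5 / (12/7::real)^12)"
  have "(2^m * th) ^ 12 \<le> (12 * K * (12/7::real) ^ m) ^ 12"
    using key thpos by (intro power_mono) auto
  then have A: "(2::real)^(12*m) * (5/7)^(5*m) \<le> 12^12 * K^12 * (12/7::real)^(12*m)"
    by (simp add: power_mult_distrib th12 power_mult[symmetric] mult.commute)
  have "(2^12 * (5/7)^5 / (12/7::real)^12)^m = (2::real)^(12*m) * (5/7)^(5*m) / (12/7::real)^(12*m)"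
    using pow_aux[of 2 "5/7" "12/7" m] by simp
  also have "\<dots> \<le> 12^12 * K^12" using A by (simp add: divide_le_eq)
  finally have "(2^12 * (5/7)^5 / (12/7::real)^12)^m \<le> 12^12 * K^12" .
  then have rho: "\<rho>^m \<le> 12^12 * K^12" unfolding \<rho>_def .
  have rhoval: "\<rho> = 2573571875 / 2176782336" unfolding \<rho>_def by (simp add: power_divide)
  have rho5: "2 \<le> \<rho>^5" unfolding rhoval by (simp add: power_divide)
  have rho1: "1 \<le> \<rho>" unfolding rhoval by simp
  have "(2::real) ^ (m div 5) \<le> (\<rho>^5) ^ (m div 5)" using rho5 by (intro power_mono) auto
  also have "\<dots> = \<rho> ^ (5 * (m div 5))" by (simp add: power_mult)
  also have "\<dots> \<le> \<rho> ^ m" using rho1 by (intro power_increasing) auto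
  also have "\<dots> \<le> 12^12 * K^12" by (rule rho)
  also have "\<dots> \<le> 2^48 * K^12" by simp
  finally have "real (2 ^ (m div 5)) \<le> real (2^48 * K^12)" by simp
  then show ?thesis unfolding m_def by (simp only: of_nat_le_iff)
qed

definition uv :: "nat \<Rightarrow> nat \<Rightarrow> nat" where "uv j e = Suc (2*j + e)"
definition wv :: "nat \<Rightarrow> nat \<Rightarrow> nat \<Rightarrow> nat" where "wv M r e = Suc (2*M + 2*r + e)"
definition gad :: "nat \<Rightarrow> nat \<times> nat \<Rightarrow> bool \<Rightarrow> nat set list" where
  "gad M g \<beta> = (if \<beta> then [{uv (fst g) 0, wv M (fst g + snd g) 0}, {uv (fst g) 1, wv M (fst g + snd g) 1}]
     else [{uv (fst g) 0, wv M (fst g + snd g) 1}, {uv (fst g) 1, wv M (fst g + snd g) 0}])"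
definition crossing :: "nat set \<Rightarrow> nat set \<Rightarrow> bool" where
  "crossing X e \<longleftrightarrow> e \<inter> X \<noteq> {} \<and> e - X \<noteq> {}"

lemma cut_mset: "cut_size (mset xs) X = length (filter (crossing X) xs)"
  unfolding cut_size_def crossing_def[abs_def] by (simp add: mset_filter[symmetric] del: mset_filter)

lemma cross_uw:
  assumes "u \<noteq> w" "u \<noteq> b" "w \<noteq> a" "a \<noteq> b"
  shows "crossing {a,b} {u,w} = ((u = a) \<noteq> (w = b))"
  using assms unfolding crossing_def by auto

lemma gad_cross:
  assumes "j' < M" "j < M"
  shows "length (filter (crossing {uv j 0, wv M (j+t) 0}) (gad M (j',t') \<beta>)) =
    (if (j',t') = (j,t) then (if \<beta> then 0 else 2) else (if j' = j then 1 else 0) + (if j'+t' = j+t then 1 else 0))"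
proof -
  have ne: "uv a e \<noteq> wv M r e'" if "a < M" "e \<le> 1" for a e r e'
    using that unfolding uv_def wv_def by simp
  have uvi: "uv a e = uv a' e' \<longleftrightarrow> a = a' \<and> e = e'" if "e \<le> 1" "e' \<le> 1" for a a' e e'
    using that unfolding uv_def by presburger
  have wvi: "wv M r e = wv M r' e' \<longleftrightarrow> r = r' \<and> e = e'" if "e \<le> 1" "e' \<le> 1" for r r' e e'
    using that unfolding wv_def by presburger
  have cr: "crossing {uv j 0, wv M (j+t) 0} {uv j' e, wv M (j'+t') e'} =
     ((j' = j \<and> e = 0) \<noteq> (j'+t' = j+t \<and> e' = 0))" if "e \<le> 1" "e' \<le> 1" for e e'
    using that assms by (subst cross_uw) (auto simp: ne ne[THEN not_sym] uvi wvi)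
  have c00: "crossing {uv j 0, wv M (j+t) 0} {uv j' 0, wv M (j'+t') 0} = ((j' = j) \<noteq> (j'+t' = j+t))"
    using cr[of 0 0] by simp
  have c11: "crossing {uv j 0, wv M (j+t) 0} {uv j' 1, wv M (j'+t') 1} = False"
    using cr[of 1 1] by simp
  have c01: "crossing {uv j 0, wv M (j+t) 0} {uv j' 0, wv M (j'+t') 1} = (j' = j)"
    using cr[of 0 1] by simp
  have c10: "crossing {uv j 0, wv M (j+t) 0} {uv j' 1, wv M (j'+t') 0} = (j'+t' = j+t)"
    using cr[of 1 0] by simp
  have len2: "length (filter P [e1, e2]) = (if P e1 then 1 else 0) + (if P e2 then 1 else 0)" for P and e1 e2 :: "nat set"
    by simp
  show ?thesis
    unfolding gad_def fst_conv snd_conv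
    by (cases \<beta>) (simp_all only: if_True if_False len2 c00 c11 c01 c10, auto)
qed

definition alice :: "nat \<Rightarrow> nat \<Rightarrow> (nat \<times> nat \<Rightarrow> bool) \<Rightarrow> nat set list" where
  "alice M D x = concat (map (\<lambda>g. gad M g (x g)) (List.product [0..<M] [0..<D]))"

definition c0 :: "nat \<Rightarrow> nat \<Rightarrow> nat \<times> nat \<Rightarrow> nat" where
  "c0 M D q = (\<Sum>g\<in>({..<M} \<times> {..<D}) - {q}.
      (if fst g = fst q then 1 else 0) + (if fst g + snd g = fst q + snd q then 1 else 0))"

lemma len_filter_concat: "length (filter P (concat (map f L))) = sum_list (map (\<lambda>g. length (filter P (f g))) L)"
  by (induction L) auto

lemma alice_cut:
  assumes "j < M" "t < D"
  shows "cut_size (mset (alice M D x)) {uv j 0, wv M (j+t) 0} = c0 M D (j,t) + (if x (j,t) then 0 else 2)"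
proof -
  let ?X = "{uv j 0, wv M (j+t) 0}" and ?I = "{..<M} \<times> {..<D}"
  have "cut_size (mset (alice M D x)) ?X = (\<Sum>g\<in>?I. length (filter (crossing ?X) (gad M g (x g))))"
    unfolding cut_mset alice_def len_filter_concat
    by (subst sum_list_distinct_conv_sum_set) (auto simp: distinct_product lessThan_atLeast0)
  also have "\<dots> = length (filter (crossing ?X) (gad M (j,t) (x (j,t)))) +
      (\<Sum>g\<in>?I - {(j,t)}. length (filter (crossing ?X) (gad M g (x g))))"
    using assms by (subst sum.remove[of _ "(j,t)"]) auto
  also have "length (filter (crossing ?X) (gad M (j,t) (x (j,t)))) = (if x (j,t) then 0 else 2)"
    using gad_cross[of j M j t t "x (j,t)"] assms by simp
  also have "(\<Sum>g\<in>?I - {(j,t)}. length (filter (crossing ?X) (gad M g (x g)))) = c0 M D (j,t)"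
    unfolding c0_def
  proof (rule sum.cong[OF refl])
    fix g assume g: "g \<in> ?I - {(j,t)}"
    obtain j' t' where gg: "g = (j',t')" by (cases g)
    show "length (filter (crossing ?X) (gad M g (x g))) =
      (if fst g = fst (j,t) then 1 else 0) + (if fst g + snd g = fst (j,t) + snd (j,t) then 1 else 0)"
      using gad_cross[of j' M j t t' "x g"] assms g gg by auto
  qed
  finally show ?thesis by simp
qed

lemma c0_bound:
  assumes "j < M" "t < D"
  shows "c0 M D (j,t) \<le> 2 * (D - 1)"
proof -
  let ?S = "{..<M} \<times> {..<D} - {(j,t)}"
  have fin: "finite ?S" by simp
  have "c0 M D (j,t) = card {g\<in>?S. fst g = j} + card {g\<in>?S. fst g + snd g = j + t}"
    unfolding c0_def by (simp add: sum.distrib sum.If_cases Int_def)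
  also have "card {g\<in>?S. fst g = j} \<le> D - 1"
  proof -
    have "{g\<in>?S. fst g = j} \<subseteq> {j} \<times> ({..<D} - {t})" by auto
    then have "card {g\<in>?S. fst g = j} \<le> card ({j} \<times> ({..<D} - {t}))" by (intro card_mono) auto
    also have "\<dots> = D - 1" using assms by (simp add: card_cartesian_product)
    finally show ?thesis .
  qed
  also have "card {g\<in>?S. fst g + snd g = j + t} \<le> D - 1"
  proof -
    have inj: "inj_on snd {g\<in>?S. fst g + snd g = j + t}"
      by (auto simp: inj_on_def)
    have "snd ` {g\<in>?S. fst g + snd g = j + t} \<subseteq> {..<D} - {t}" by auto
    then have "card (snd ` {g\<in>?S. fst g + snd g = j + t}) \<le> card ({..<D} - {t})" by (intro card_mono) auto
    moreover have "card ({..<D} - {t}) = D - 1" using assms by simp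
    ultimately show ?thesis unfolding card_image[OF inj] by simp
  qed
  finally show ?thesis by simp
qed

definition qa :: "nat \<times> nat \<Rightarrow> nat" where "qa q = uv (fst q) 0"
definition qb :: "nat \<Rightarrow> nat \<times> nat \<Rightarrow> nat" where "qb M q = wv M (fst q + snd q) 0"

definition hubl :: "nat \<Rightarrow> nat \<Rightarrow> nat \<Rightarrow> nat \<Rightarrow> nat set list" where
  "hubl n k a b = concat (map (\<lambda>v. replicate k {0,v}) (filter (\<lambda>v. v \<noteq> a \<and> v \<noteq> b \<and> v \<noteq> 0) [0..<n]))"

definition bobE :: "nat \<Rightarrow> nat \<Rightarrow> nat \<Rightarrow> nat \<Rightarrow> nat \<times> nat \<Rightarrow> nat set list" where
  "bobE n k M D q = replicate k {qa q, qb M q} @ hubl n k (qa q) (qb M q) @ replicate (k - 1 - c0 M D q) {qa q, 0}"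

definition bobS :: "nat \<Rightarrow> nat \<Rightarrow> nat \<Rightarrow> nat \<Rightarrow> nat \<times> nat \<Rightarrow> item list" where
  "bobS n k M D q = map Inl (bobE n k M D q) @ [Inr {qa q, 0}]"

definition strm :: "nat \<Rightarrow> nat \<Rightarrow> nat \<Rightarrow> nat \<Rightarrow> (nat \<times> nat \<Rightarrow> bool) \<Rightarrow> nat \<times> nat \<Rightarrow> item list" where
  "strm n k M D x q = map Inl (alice M D x) @ bobS n k M D q"

lemma cut_plus: "cut_size (A + B) X = cut_size A X + cut_size B X"
  by (simp add: cut_size_def)

lemma cut_count: "e \<inter> X \<noteq> {} \<Longrightarrow> e - X \<noteq> {} \<Longrightarrow> count E e \<le> cut_size E X"
proof -
  assume "e \<inter> X \<noteq> {}" "e - X \<noteq> {}"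
  then have "count E e = count (filter_mset (\<lambda>e. e \<inter> X \<noteq> {} \<and> e - X \<noteq> {}) E) e" by simp
  also have "\<dots> \<le> cut_size E X" unfolding cut_size_def by (rule count_le_size)
  finally show ?thesis .
qed

lemma cut_compl:
  assumes "\<forall>e\<in>#E. e \<subseteq> V"
  shows "cut_size E (V - X) = cut_size E X"
  unfolding cut_size_def
proof -
  have "filter_mset (\<lambda>e. e \<inter> (V - X) \<noteq> {} \<and> e - (V - X) \<noteq> {}) E = filter_mset (\<lambda>e. e \<inter> X \<noteq> {} \<and> e - X \<noteq> {}) E"
    by (rule filter_mset_cong[OF refl]) (use assms in blast)
  then show "size (filter_mset (\<lambda>e. e \<inter> (V - X) \<noteq> {} \<and> e - (V - X) \<noteq> {}) E) = size (filter_mset (\<lambda>e. e \<inter> X \<noteq> {} \<and> e - X \<noteq> {}) E)"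
    by simp
qed

lemma hubl_count: "v \<in> set L \<Longrightarrow> k \<le> count (mset (concat (map (\<lambda>v. replicate k {0::nat,v}) L))) {0,v}"
  by (induction L) auto

lemma hubl_count': "v < n \<Longrightarrow> v \<noteq> a \<Longrightarrow> v \<noteq> b \<Longrightarrow> v \<noteq> 0 \<Longrightarrow> k \<le> count (mset (hubl n k a b)) {0,v}"
  unfolding hubl_def by (rule hubl_count) auto

lemma set_hubl: "e \<in> set (hubl n k a b) \<Longrightarrow> \<exists>v<n. v \<noteq> a \<and> v \<noteq> b \<and> v \<noteq> 0 \<and> e = {0,v}"
  unfolding hubl_def by (auto split: if_splits)

lemma inl_app: "[e. Inl e \<leftarrow> map Inl ys @ zs] = ys @ [e. Inl e \<leftarrow> zs]"
  by (induction ys) auto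

lemma inr_app: "[l. Inr l \<leftarrow> map Inl ys @ zs] = [l. Inr l \<leftarrow> zs]"
  by (induction ys) auto

lemma stream_edges_strm: "stream_edges (strm n k M D x q) = mset (alice M D x) + mset (bobE n k M D q)"
  unfolding stream_edges_def strm_def bobS_def
  using inl_app[of "alice M D x" "map Inl (bobE n k M D q) @ [Inr {qa q, 0}]"]
    inl_app[of "bobE n k M D q" "[Inr {qa q, 0}]"] by simp

lemma stream_links_strm: "stream_links (strm n k M D x q) = {{qa q, 0}}"
  unfolding stream_links_def strm_def bobS_def
  using inr_app[of "alice M D x" "map Inl (bobE n k M D q) @ [Inr {qa q, 0}]"]
    inr_app[of "bobE n k M D q" "[Inr {qa q, 0}]"] by simp

context
  fixes n k M D j t :: nat
  assumes k1: "1 \<le> k" and D1: "1 \<le> D" and DM: "D \<le> M" and Dk: "2*D \<le> k+1"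
    and Mn: "6*M \<le> n" and jM: "j < M" and tD: "t < D"
begin

abbreviation "va \<equiv> uv j 0"
abbreviation "vb \<equiv> wv M (j+t) 0"

lemma qa_eq: "qa (j,t) = va" by (simp add: qa_def)
lemma qb_eq: "qb M (j,t) = vb" by (simp add: qb_def)

lemma va_lt: "va < n" using jM Mn by (simp add: uv_def)
lemma vb_lt: "vb < n" using jM tD DM Mn by (simp add: wv_def)
lemma va_vb: "va \<noteq> vb" using jM by (simp add: uv_def wv_def)
lemma va0: "va \<noteq> 0" by (simp add: uv_def)
lemma vb0: "vb \<noteq> 0" by (simp add: wv_def)

lemma alice_pair: "e \<in> set (alice M D x) \<Longrightarrow> is_pair n e"
proof -
  assume "e \<in> set (alice M D x)"
  then obtain j' t' where g: "j' < M" "t' < D" and e: "e \<in> set (gad M (j',t') (x (j',t')))"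
    unfolding alice_def by auto
  have u: "uv j' c < n" if "c \<le> 1" for c using g that Mn by (simp add: uv_def)
  have w: "wv M (j'+t') c < n" if "c \<le> 1" for c using g that Mn DM by (simp add: wv_def)
  have ne: "uv j' c \<noteq> wv M (j'+t') c'" if "c \<le> 1" for c c' using g that by (simp add: uv_def wv_def)
  show ?thesis using e u[of 0] u[of 1] w[of 0] w[of 1] ne[of 0] ne[of 1]
    by (auto simp: gad_def is_pair_def verts_def split: if_splits)
qed

lemma bob_pair: "e \<in> set (bobE n k M D (j,t)) \<Longrightarrow> is_pair n e"
proof -
  assume "e \<in> set (bobE n k M D (j,t))"
  then have "e = {va,vb} \<or> e = {va,0} \<or> e \<in> set (hubl n k va vb)"
    by (auto simp: bobE_def qa_eq qb_eq split: if_splits)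
  moreover have "is_pair n {va,vb}" using va_lt vb_lt va_vb by (auto simp: is_pair_def verts_def)
  moreover have "is_pair n {va,0}" using va_lt va0 by (auto simp: is_pair_def verts_def)
  moreover have "is_pair n e" if eh: "e \<in> set (hubl n k va vb)"
  proof -
    obtain v where "v < n" "v \<noteq> 0" "e = {0,v}" using set_hubl[OF eh] by blast
    then show ?thesis by (auto simp: is_pair_def verts_def)
  qed
  ultimately show ?thesis by blast
qed

lemma cut_bob_ab: "cut_size (mset (bobE n k M D (j,t))) {va, vb} = k - 1 - c0 M D (j,t)"
proof -
  have h: "filter (crossing {va, vb}) (hubl n k va vb) = []"
    by (rule filter_False) (use va0 vb0 in \<open>auto simp: crossing_def dest!: set_hubl\<close>)
  show ?thesis using va_vb va0 vb0
    unfolding cut_mset bobE_def qa_eq qb_eq by (simp add: h crossing_def)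
qed

lemma cut_G_ab: "cut_size (mset (alice M D x) + mset (bobE n k M D (j,t))) {va, vb} =
   k - 1 + (if x (j,t) then 0 else 2)"
proof -
  have "c0 M D (j,t) \<le> k - 1" using c0_bound[OF jM tD] Dk by linarith
  then show ?thesis unfolding cut_plus cut_bob_ab alice_cut[OF jM tD] by simp
qed

lemma cut_cases:
  assumes "X \<noteq> {}" "X \<subseteq> verts n" "X \<noteq> verts n"
  shows "k \<le> cut_size (mset (bobE n k M D (j,t))) X \<or> X = {va, vb} \<or> X = verts n - {va, vb}"
proof -
  let ?E = "mset (bobE n k M D (j,t))"
  have cab: "k \<le> count ?E {va, vb}" by (simp add: bobE_def qa_eq qb_eq)
  have chub: "k \<le> count ?E {0, v}" if "v < n" "v \<noteq> va" "v \<noteq> vb" "v \<noteq> 0" for v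
  proof -
    have "k \<le> count (mset (hubl n k va vb)) {0,v}" by (rule hubl_count') (use that in auto)
    then show ?thesis by (simp add: bobE_def qa_eq qb_eq)
  qed
  have V: "verts n = {0..<n}" by (simp add: verts_def)
  have in0: "0 \<in> verts n" using va_lt by (simp add: verts_def)
  show ?thesis
  proof (cases "(va \<in> X) = (vb \<in> X)")
    case False
    then have "{va, vb} \<inter> X \<noteq> {}" "{va, vb} - X \<noteq> {}" by auto
    then have "count ?E {va,vb} \<le> cut_size ?E X" by (rule cut_count)
    then show ?thesis using cab by simp
  next
    case same: True
    show ?thesis
    proof (cases "0 \<in> X")
      case True
      show ?thesis
      proof (cases "\<exists>w\<in>verts n - X. w \<noteq> va \<and> w \<noteq> vb")
        case True
        then obtain w where w: "w \<in> verts n" "w \<notin> X" "w \<noteq> va" "w \<noteq> vb" by auto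
        then have "w \<noteq> 0" using \<open>0 \<in> X\<close> by metis
        have "{0, w} \<inter> X \<noteq> {}" "{0, w} - X \<noteq> {}" using w \<open>0 \<in> X\<close> by auto
        then have "count ?E {0,w} \<le> cut_size ?E X" by (rule cut_count)
        moreover have "k \<le> count ?E {0,w}" using w \<open>w \<noteq> 0\<close> by (intro chub) (auto simp: verts_def)
        ultimately show ?thesis by simp
      next
        case False
        then have "verts n - X \<subseteq> {va, vb}" by auto
        moreover have "verts n - X \<noteq> {}" using assms by auto
        ultimately have "verts n - X = {va, vb}" using same va_lt vb_lt by (auto simp: verts_def)
        then have "X = verts n - {va, vb}" using assms by auto
        then show ?thesis by simp
      qed
    next
      case False
      show ?thesis
      proof (cases "\<exists>w\<in>X. w \<noteq> va \<and> w \<noteq> vb")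
        case True
        then obtain w where w: "w \<in> X" "w \<noteq> va" "w \<noteq> vb" by auto
        then have "w \<noteq> 0" using \<open>0 \<notin> X\<close> by metis
        have "{0, w} \<inter> X \<noteq> {}" "{0, w} - X \<noteq> {}" using w \<open>0 \<notin> X\<close> by auto
        then have "count ?E {0,w} \<le> cut_size ?E X" by (rule cut_count)
        moreover have "k \<le> count ?E {0,w}" using w \<open>w \<noteq> 0\<close> assms(2) by (intro chub) (auto simp: verts_def)
        ultimately show ?thesis by simp
      next
        case False
        then have "X \<subseteq> {va, vb}" by auto
        then have "X = {va, vb}" using same assms(1) by auto
        then show ?thesis by simp
      qed
    qed
  qed
qed

abbreviation "Gx x \<equiv> mset (alice M D x) + mset (bobE n k M D (j,t))"

lemma edges_in: "\<forall>e\<in>#Gx x. e \<subseteq> verts n"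
  using alice_pair bob_pair by (auto simp: is_pair_def)

lemma cut_G3:
  assumes "X \<noteq> {}" "X \<subseteq> verts n" "X \<noteq> verts n"
  shows "k \<le> cut_size (Gx x) X \<or> ((X = {va,vb} \<or> X = verts n - {va,vb}) \<and>
           cut_size (Gx x) X = k - 1 + (if x (j,t) then 0 else 2))"
  using cut_cases[OF assms]
proof (elim disjE)
  assume "k \<le> cut_size (mset (bobE n k M D (j,t))) X"
  then show ?thesis unfolding cut_plus by simp
next
  assume "X = {va, vb}"
  then show ?thesis using cut_G_ab by simp
next
  assume X: "X = verts n - {va, vb}"
  have "cut_size (Gx x) X = cut_size (Gx x) {va, vb}" unfolding X by (rule cut_compl[OF edges_in])
  then show ?thesis using cut_G_ab X by simp
qed

lemma link_cut:
  assumes "X = {va,vb} \<or> X = verts n - {va,vb}"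
  shows "1 \<le> cut_size (mset_set {{va, 0}}) X"
proof -
  have "{va,0} \<inter> X \<noteq> {}" "{va,0} - X \<noteq> {}"
    using assms va0 vb0 va_lt by (auto simp: verts_def)
  then have "count (mset_set {{va, 0}}) {va,0} \<le> cut_size (mset_set {{va, 0}}) X" by (rule cut_count)
  then show ?thesis by simp
qed

lemma strm_valid: "valid_stream n k (strm n k M D x (j,t))"
  unfolding valid_stream_def stream_edges_strm stream_links_strm qa_eq
proof (intro conjI)
  show "\<forall>y\<in>set (strm n k M D x (j, t)). is_pair n (case y of Inl e \<Rightarrow> e | Inr l \<Rightarrow> l)"
  proof
    fix y assume "y \<in> set (strm n k M D x (j, t))"
    then have "(\<exists>e\<in>set (alice M D x). y = Inl e) \<or> (\<exists>e\<in>set (bobE n k M D (j,t)). y = Inl e) \<or> y = Inr {va,0}"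
      by (auto simp: strm_def bobS_def qa_eq)
    moreover have "is_pair n {va,0}" using va_lt va0 by (auto simp: is_pair_def verts_def)
    ultimately show "is_pair n (case y of Inl e \<Rightarrow> e | Inr l \<Rightarrow> l)"
      using alice_pair bob_pair by auto
  qed
  show "k_edge_connected n (k - 1) (Gx x)"
    unfolding k_edge_connected_def
  proof (intro allI impI)
    fix X assume "X \<noteq> {} \<and> X \<subset> verts n"
    then have "X \<noteq> {}" "X \<subseteq> verts n" "X \<noteq> verts n" by auto
    from cut_G3[OF this, of x] show "k - 1 \<le> cut_size (Gx x) X" by (cases "x (j,t)") auto
  qed
  show "k_edge_connected n k (Gx x + mset_set {{va, 0}})"
    unfolding k_edge_connected_def
  proof (intro allI impI)
    fix X assume X: "X \<noteq> {} \<and> X \<subset> verts n"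
    then have "X \<noteq> {}" "X \<subseteq> verts n" "X \<noteq> verts n" by auto
    from cut_G3[OF this, of x] have "k \<le> cut_size (Gx x) X \<or> ((X = {va,vb} \<or> X = verts n - {va,vb}) \<and>
           cut_size (Gx x) X = k - 1 + (if x (j,t) then 0 else 2))" .
    then show "k \<le> cut_size (Gx x + mset_set {{va, 0}}) X"
      unfolding cut_plus using link_cut[of X] k1 by (auto split: if_splits)
  qed
qed

lemma strm_correct:
  assumes as: "approx_solution \<alpha> n k (strm n k M D x (j,t)) S"
  shows "(S \<noteq> {}) = x (j,t)"
proof -
  have aug: "augments n k (strm n k M D x (j,t)) S"
    using as unfolding approx_solution_def by (rule conjunct1)
  have opt: "\<forall>S'. augments n k (strm n k M D x (j,t)) S' \<longrightarrow> real (card S) \<le> \<alpha> * real (card S')"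
    using as unfolding approx_solution_def by (rule conjunct2)
  have kS: "k_edge_connected n k (Gx x + mset_set S)"
    using aug unfolding augments_def stream_edges_strm by (rule conjunct2)
  have Sl: "S \<subseteq> {{va, 0}}"
    using aug unfolding augments_def stream_links_strm qa_eq by (rule conjunct1)
  have finS: "finite S" using Sl by (rule finite_subset) simp
  show ?thesis
  proof (cases "x (j,t)")
    case True
    show ?thesis
    proof (rule ccontr)
      assume "(S \<noteq> {}) \<noteq> x (j,t)"
      then have S: "S = {}" using True by simp
      have kc: "k_edge_connected n k (Gx x)" using kS unfolding S by simp
      have z: "0 \<in> verts n" using va_lt by (simp add: verts_def)
      have nz: "0 \<notin> {va,vb}" using va0 vb0 by simp
      have sub: "{va,vb} \<subseteq> verts n" using va_lt vb_lt by (simp add: verts_def)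
      have ne: "{va,vb} \<noteq> verts n"
      proof
        assume "{va,vb} = verts n"
        with z nz show False by simp
      qed
      have "{va, vb} \<noteq> {} \<and> {va, vb} \<subset> verts n" using sub ne by (simp add: psubset_eq)
      then have "k \<le> cut_size (Gx x) {va, vb}" using kc unfolding k_edge_connected_def by (elim allE impE) auto
      then show False using cut_G_ab[of x] True k1 by simp
    qed
  next
    case False
    have kc: "k_edge_connected n k (Gx x)"
      unfolding k_edge_connected_def
    proof (intro allI impI)
      fix X assume "X \<noteq> {} \<and> X \<subset> verts n"
      then have "X \<noteq> {}" "X \<subseteq> verts n" "X \<noteq> verts n" by auto
      from cut_G3[OF this, of x] show "k \<le> cut_size (Gx x) X" using False k1 by auto
    qed
    have "augments n k (strm n k M D x (j,t)) {}"
      unfolding augments_def stream_edges_strm using kc by simp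
    then have "real (card S) \<le> \<alpha> * real (card ({}::nat set set))"
      using opt by blast
    then have "card S = 0" by simp
    then have "S = {}" using finS by simp
    then show ?thesis using False by simp
  qed
qed

end

lemma geom_lt: "(\<Sum>i\<le>s. (2::nat)^i) < 2^(Suc s)"
proof (induction s)
  case 0
  show ?case by simp
next
  case (Suc s)
  have "(\<Sum>i\<le>Suc s. (2::nat)^i) = (\<Sum>i\<le>s. 2^i) + 2^Suc s" by (rule sum.atMost_Suc)
  also have "\<dots> < 2^Suc s + 2^Suc s" using Suc.IH by (rule add_strict_right_mono)
  also have "\<dots> = 2^Suc (Suc s)" by (simp only: power_Suc mult_2)
  finally show ?case .
qed

lemma final_arith:
  fixes n k M D s :: nat
  assumes "M * D div 5 \<le> 12 * s + 60" "n * k \<le> 256 * (M * D)" "160000 \<le> n" "1 \<le> k"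
  shows "real n * real k / 30720 \<le> real s"
proof -
  have "n \<le> n * k" using assms(4) by simp
  have "M * D \<le> 5 * (M * D div 5) + 4" by simp
  then have "n * k \<le> 30720 * s" using assms \<open>n \<le> n * k\<close> by linarith
  then have "real (n * k) \<le> real (30720 * s)" by (rule of_nat_mono)
  then show ?thesis by simp
qed

theorem mainTheorem9:
  "\<forall>\<alpha>::real. \<alpha> \<ge> 1 \<longrightarrow> (\<exists>c>0. \<exists>N. \<forall>n k s A P.
      N \<le> n \<and> 1 \<le> k \<and> k \<le> n \<and> solves A P \<alpha> n k \<and> uses_space A n k s
      \<longrightarrow> real s \<ge> c * real n * real k)"
proof (intro allI impI)
  fix \<alpha> :: real assume "\<alpha> \<ge> 1"
  show "\<exists>c>0. \<exists>N. \<forall>n k s A P.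
      N \<le> n \<and> 1 \<le> k \<and> k \<le> n \<and> solves A P \<alpha> n k \<and> uses_space A n k s
      \<longrightarrow> real s \<ge> c * real n * real k"
  proof (intro exI[of _ "1/30720"] conjI exI[of _ 160000] allI impI)
    show "(0::real) < 1/30720" by simp
    fix n k s A P
    assume H: "160000 \<le> n \<and> 1 \<le> k \<and> k \<le> n \<and> solves A P \<alpha> n k \<and> uses_space A n k s"
    then have n: "160000 \<le> n" and k1: "1 \<le> k" and kn: "k \<le> n" and sol: "solves A P \<alpha> n k"
      and sp: "uses_space A n k s" by auto
    define M where "M = n div 8"
    define D where "D = min ((k+1) div 2) M"
    define I where "I = {..<M} \<times> {..<D}"
    have M1: "1 \<le> M" using n unfolding M_def by simp
    have D1: "1 \<le> D" using k1 M1 unfolding D_def by simp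
    have DM: "D \<le> M" unfolding D_def by simp
    have Dk: "2 * D \<le> k + 1" unfolding D_def by linarith
    have Mn: "6 * M \<le> n" unfolding M_def by linarith
    have M16: "n \<le> 16 * M" using n unfolding M_def by linarith
    have D16: "k \<le> 16 * D" using kn M16 unfolding D_def by linarith
    define \<sigma> where "\<sigma> r x = run A r (map Inl (alice M D x))" for r x
    define Dc where "Dc r st q = (out A r (fold (\<lambda>x st. step A r st x) (bobS n k M D q) st) \<noteq> {})"
      for r st q
    define K where "K = (\<Sum>i\<le>s. (2::nat)^i)"
    have runeq: "run A r (strm n k M D x q) = fold (\<lambda>x st. step A r st x) (bobS n k M D q) (\<sigma> r x)" for r x q
      unfolding run_def strm_def \<sigma>_def by simp
    have finI: "finite I" unfolding I_def by simp
    have "(0,0) \<in> I" using M1 D1 unfolding I_def by auto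
    then have neI: "I \<noteq> {}" by blast
    have len: "length (\<sigma> r x) \<le> s" for r x
    proof -
      have v: "valid_stream n k (strm n k M D x (0,0))"
        by (rule strm_valid) (use k1 D1 DM Dk Mn M1 in auto)
      have "length (run A r (take (length (map Inl (alice M D x) :: item list)) (strm n k M D x (0,0)))) \<le> s"
        using sp v unfolding uses_space_def by blast
      then show ?thesis unfolding \<sigma>_def strm_def by simp
    qed
    have cardK: "\<forall>r. card (\<sigma> r ` PiE I (\<lambda>_. UNIV)) \<le> K"
    proof
      fix r
      have "\<sigma> r ` PiE I (\<lambda>_. UNIV) \<subseteq> {xs. set xs \<subseteq> (UNIV::bool set) \<and> length xs \<le> s}"
        using len by auto
      then have "card (\<sigma> r ` PiE I (\<lambda>_. UNIV)) \<le> card {xs. set xs \<subseteq> (UNIV::bool set) \<and> length xs \<le> s}"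
        by (rule card_mono[rotated]) (use finite_lists_length_le[of "UNIV::bool set" s] in simp)
      also have "\<dots> = K" unfolding K_def using card_lists_length_le[of "UNIV::bool set" s] by simp
      finally show "card (\<sigma> r ` PiE I (\<lambda>_. UNIV)) \<le> K" .
    qed
    have pr: "\<forall>x\<in>PiE I (\<lambda>_. UNIV). \<forall>q\<in>I. measure_pmf.prob P {r. Dc r (\<sigma> r x) q = x q} \<ge> 2/3"
    proof (intro ballI)
      fix x :: "nat \<times> nat \<Rightarrow> bool" and q assume "x \<in> PiE I (\<lambda>_. UNIV)" "q \<in> I"
      then obtain j t where q: "q = (j,t)" "j < M" "t < D" unfolding I_def by auto
      have v: "valid_stream n k (strm n k M D x q)"
        unfolding q(1) by (rule strm_valid) (use k1 D1 DM Dk Mn q in auto)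
      have "2/3 \<le> measure_pmf.prob P {r. approx_solution \<alpha> n k (strm n k M D x q) (out A r (run A r (strm n k M D x q)))}"
        using sol v unfolding solves_def by blast
      also have "\<dots> \<le> measure_pmf.prob P {r. Dc r (\<sigma> r x) q = x q}"
      proof (rule measure_pmf.finite_measure_mono)
        show "{r. approx_solution \<alpha> n k (strm n k M D x q) (out A r (run A r (strm n k M D x q)))}
              \<subseteq> {r. Dc r (\<sigma> r x) q = x q}"
        proof
          fix r assume "r \<in> {r. approx_solution \<alpha> n k (strm n k M D x q) (out A r (run A r (strm n k M D x q)))}"
          then have "approx_solution \<alpha> n k (strm n k M D x (j,t)) (out A r (run A r (strm n k M D x q)))"
            using q by simp
          then have "(out A r (run A r (strm n k M D x q)) \<noteq> {}) = x (j,t)"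
            by (rule strm_correct[rotated 7]) (use k1 D1 DM Dk Mn q in auto)
          then show "r \<in> {r. Dc r (\<sigma> r x) q = x q}" unfolding Dc_def runeq using q by simp
        qed
      qed simp
      finally show "measure_pmf.prob P {r. Dc r (\<sigma> r x) q = x q} \<ge> 2/3" .
    qed
    have main: "2 ^ (card I div 5) \<le> 2^48 * K^12"
      by (rule comm_lb[OF finI neI cardK pr])
    have "K^12 \<le> (2^(Suc s))^12" using geom_lt[of s] unfolding K_def by (intro power_mono) auto
    then have "(2::nat)^48 * K^12 \<le> 2^48 * (2^(Suc s))^12" by (rule mult_left_mono) simp
    also have "\<dots> = 2 ^ (48 + Suc s * 12)" by (simp only: power_add power_mult)
    finally have "(2::nat) ^ (card I div 5) \<le> 2 ^ (48 + Suc s * 12)"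
      using main by (rule order.trans[rotated])
    then have "card I div 5 \<le> 48 + Suc s * 12" by (rule power_le_imp_le_exp[rotated]) simp
    moreover have "card I = M * D" unfolding I_def by (simp add: card_cartesian_product)
    ultimately have a1: "M * D div 5 \<le> 12 * s + 60" by simp
    have a2: "n * k \<le> 256 * (M * D)"
    proof -
      have "n * k \<le> (16 * M) * (16 * D)" using M16 D16 by (rule mult_le_mono)
      then show ?thesis by simp
    qed
    have "real n * real k / 30720 \<le> real s" by (rule final_arith[OF a1 a2 n k1])
    then show "1 / 30720 * real n * real k \<le> real s" by simp
  qed
qed

end
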